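(* Let $1\le k\le n$ be integers and $\eta=k/n$. For $\mu'\in\mathbb R$ let $P_{\mu'}=\mathcal N(\mu',1)^{\otimes n}$, and for $\delta\ge0$ let $Q_{\mu',\delta}$ be the law of $X+\delta e_I$, where $X\sim P_{\mu'}$, $I\subseteq[n]$ is a uniformly random subset of size $k$ independent of $X$, and $e_I\in\{0,1\}^n$ is the indicator vector of $I$. Then for every $\mu'\in\mathbb R$ and $\delta\ge0$, \[\chi^2(Q_{\mu',\delta}\,\|\,P_{\mu'+\eta\delta})\le\exp\!\Big(\frac{k^2}{n}\big(e^{\delta^2}-1-\delta^2\big)\Big)-1.\]
   Context: For probability measures $Q\ll P$, $\chi^2(Q\|P)=\mathbb E_P\big[(\frac{dQ}{dP}-1)^2\big]$. *)

theory Defs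
  imports "HOL-Probability.Probability"
begin

definition chi2_div :: "'a measure \<Rightarrow> 'a measure \<Rightarrow> ennreal" where
  "chi2_div Q P =
     (if absolutely_continuous P Q \<and> sets Q = sets P
      then (\<integral>\<^sup>+ x. ennreal ((enn2real (RN_deriv P Q x) - 1)\<^sup>2) \<partial>P)
      else \<infinity>)"

definition gauss_prod :: "nat \<Rightarrow> real \<Rightarrow> (nat \<Rightarrow> real) measure" where
  "gauss_prod n \<mu> = PiM {..<n} (\<lambda>_. density lborel (normal_density \<mu> 1))"

definition rand_subset :: "nat \<Rightarrow> nat \<Rightarrow> nat set pmf" where
  "rand_subset n k = pmf_of_set {I. I \<subseteq> {..<n} \<and> card I = k}"

definition planted_law :: "nat \<Rightarrow> nat \<Rightarrow> real \<Rightarrow> real \<Rightarrow> (nat \<Rightarrow> real) measure" where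
  "planted_law n k \<mu> \<delta> =
     distr (gauss_prod n \<mu> \<Otimes>\<^sub>M measure_pmf (rand_subset n k)) (gauss_prod n \<mu>)
       (\<lambda>(x, I). \<lambda>i\<in>{..<n}. x i + \<delta> * indicator I i)"

end

theory Submission
  imports Defs
begin


lemma choose_ratio_bound:
  assumes "a \<le> k" "k \<le> n" "0 < n"
  shows "real ((n-a) choose (k-a)) \<le> (real k / real n)^a * real (n choose k)"
  using assms
proof (induction a)
  case 0 then show ?case by simp
next
  case (Suc a)
  have IH: "real ((n-a) choose (k-a)) \<le> (real k / real n)^a * real (n choose k)"
    using Suc by simp
  have eq: "real (n-a) * real ((n-Suc a) choose (k-Suc a)) = real ((n-a) choose (k-a)) * real (k-a)"
  proof -
    have "Suc (n - Suc a) = n - a" "Suc (k - Suc a) = k - a" using Suc.prems by auto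
    then show ?thesis using Suc_times_binomial_eq[of "n - Suc a" "k - Suc a"]
      by (metis of_nat_mult)
  qed
  have npos: "real (n-a) > 0" using Suc.prems by auto
  have r: "real (k-a) / real (n-a) \<le> real k / real n"
    using Suc.prems npos by (simp add: divide_simps of_nat_diff) (simp add: algebra_simps mult_left_mono)
  have "real ((n-Suc a) choose (k-Suc a)) = real ((n-a) choose (k-a)) * (real (k-a) / real (n-a))"
    using eq npos by (simp add: field_simps)
  also have "\<dots> \<le> ((real k / real n)^a * real (n choose k)) * (real k / real n)"
    by (rule mult_mono[OF IH r]) auto
  also have "\<dots> = (real k / real n)^Suc a * real (n choose k)" by simp
  finally show ?case .
qed

lemma card_supsets_le:
  assumes "A \<subseteq> {..<n}" "card A \<le> k"
  shows "card {J. J \<subseteq> {..<n} \<and> card J = k \<and> A \<subseteq> J} \<le> (n - card A) choose (k - card A)"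
proof -
  have fA: "finite A" using assms(1) finite_subset by blast
  have "card {J. J \<subseteq> {..<n} \<and> card J = k \<and> A \<subseteq> J} \<le> card {B. B \<subseteq> {..<n} - A \<and> card B = k - card A}"
  proof (rule card_inj_on_le[where f="\<lambda>J. J - A"])
    show "inj_on (\<lambda>J. J - A) {J. J \<subseteq> {..<n} \<and> card J = k \<and> A \<subseteq> J}"
      by (auto simp: inj_on_def) (metis Diff_partition)?
    show "(\<lambda>J. J - A) ` {J. J \<subseteq> {..<n} \<and> card J = k \<and> A \<subseteq> J} \<subseteq> {B. B \<subseteq> {..<n} - A \<and> card B = k - card A}"
      using fA by (auto simp: card_Diff_subset)
    show "finite {B. B \<subseteq> {..<n} - A \<and> card B = k - card A}" by simp
  qed
  also have "\<dots> = card ({..<n} - A) choose (k - card A)" by (rule n_subsets) simp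
  also have "card ({..<n} - A) = n - card A" using assms(1) fA by (simp add: card_Diff_subset)
  finally show ?thesis .
qed

lemma pow_sum_subsets:
  fixes c :: real
  assumes "finite B"
  shows "(1 + c) ^ card B = (\<Sum>A\<in>Pow B. c ^ card A)"
proof -
  have "(1 + c) ^ card B = (\<Prod>x\<in>B. c + 1)" by (simp add: add.commute)
  also have "\<dots> = (\<Sum>X\<in>Pow B. (\<Prod>x\<in>X. c) * (\<Prod>x\<in>B-X. 1))" by (rule prod_add[OF assms])
  also have "\<dots> = (\<Sum>A\<in>Pow B. c ^ card A)" by simp
  finally show ?thesis .
qed

lemma hyper_mgf_bound:
  fixes c :: real
  assumes c: "c \<ge> 0" and I: "I \<subseteq> {..<n}" "card I = k" and kn: "k \<le> n" "0 < n"
  defines "S \<equiv> {J. J \<subseteq> {..<n} \<and> card J = k}"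
  shows "(\<Sum>J\<in>S. (1 + c) ^ card (I \<inter> J)) \<le> real (card S) * (1 + c * (real k / real n)) ^ k"
proof -
  have fS: "finite S" unfolding S_def by simp
  have fI: "finite I" using I finite_subset by blast
  have cS: "card S = n choose k" unfolding S_def using n_subsets[of "{..<n}" k] by simp
  have "(\<Sum>J\<in>S. (1 + c) ^ card (I \<inter> J)) = (\<Sum>J\<in>S. \<Sum>A\<in>Pow I. if A \<subseteq> J then c ^ card A else 0)"
  proof (rule sum.cong[OF refl])
    fix J assume "J \<in> S"
    have "(1 + c) ^ card (I \<inter> J) = (\<Sum>A\<in>Pow (I \<inter> J). c ^ card A)"
      using fI by (intro pow_sum_subsets) simp
    also have "\<dots> = (\<Sum>A\<in>Pow I. if A \<subseteq> J then c ^ card A else 0)"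
      using fI by (intro sum.mono_neutral_cong_left) auto
    finally show "(1 + c) ^ card (I \<inter> J) = (\<Sum>A\<in>Pow I. if A \<subseteq> J then c ^ card A else 0)" .
  qed
  also have "\<dots> = (\<Sum>A\<in>Pow I. \<Sum>J\<in>S. if A \<subseteq> J then c ^ card A else 0)"
    by (rule sum.swap)
  also have "\<dots> = (\<Sum>A\<in>Pow I. c ^ card A * real (card {J. J \<subseteq> {..<n} \<and> card J = k \<and> A \<subseteq> J}))"
  proof (rule sum.cong[OF refl])
    fix A
    have "(\<Sum>J\<in>S. if A \<subseteq> J then c ^ card A else 0) = (\<Sum>J\<in>{J\<in>S. A \<subseteq> J}. c ^ card A)"
      using fS by (simp add: sum.inter_filter[symmetric])
    also have "\<dots> = c ^ card A * real (card {J. J \<subseteq> {..<n} \<and> card J = k \<and> A \<subseteq> J})"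
      by (simp add: S_def conj_assoc)
    finally show "(\<Sum>J\<in>S. if A \<subseteq> J then c ^ card A else 0) = c ^ card A * real (card {J. J \<subseteq> {..<n} \<and> card J = k \<and> A \<subseteq> J})" .
  qed
  also have "\<dots> \<le> (\<Sum>A\<in>Pow I. c ^ card A * ((real k / real n) ^ card A * real (card S)))"
  proof (rule sum_mono)
    fix A assume A: "A \<in> Pow I"
    have fA: "finite A" using A fI finite_subset by auto
    have ak: "card A \<le> k" using A fI I(2) card_mono by fastforce
    have "real (card {J. J \<subseteq> {..<n} \<and> card J = k \<and> A \<subseteq> J}) \<le> real ((n - card A) choose (k - card A))"
      using card_supsets_le[of A n k] A I ak by auto
    also have "\<dots> \<le> (real k / real n) ^ card A * real (card S)"
      unfolding cS using choose_ratio_bound[OF ak kn(1) kn(2)] .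
    finally show "c ^ card A * real (card {J. J \<subseteq> {..<n} \<and> card J = k \<and> A \<subseteq> J}) \<le> c ^ card A * ((real k / real n) ^ card A * real (card S))"
      using c by (intro mult_left_mono) auto
  qed
  also have "\<dots> = real (card S) * (\<Sum>A\<in>Pow I. (c * (real k / real n)) ^ card A)"
    by (simp add: sum_distrib_left power_mult_distrib power_divide mult_ac)
  also have "\<dots> = real (card S) * (1 + c * (real k / real n)) ^ k"
    using pow_sum_subsets[OF fI, of "c * (real k / real n)"] I(2) by simp
  finally show ?thesis .
qed




abbreviation NM :: "real \<Rightarrow> real measure" where
  "NM m \<equiv> density lborel (normal_density m 1)"

definition PM :: "nat \<Rightarrow> (nat \<Rightarrow> real) \<Rightarrow> (nat \<Rightarrow> real) measure" where
  "PM n m = PiM {..<n} (\<lambda>i. NM (m i))"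

definition ell :: "real \<Rightarrow> real \<Rightarrow> real \<Rightarrow> real" where
  "ell a \<nu> y = exp (a * (y - \<nu>) - a\<^sup>2 / 2)"

lemma ell_pos: "ell a \<nu> y > 0" by (simp add: ell_def)

lemma ell_meas[measurable]: "ell a \<nu> \<in> borel_measurable borel"
  unfolding ell_def by measurable

lemma gauss_prod_PM: "gauss_prod n \<mu> = PM n (\<lambda>_. \<mu>)"
  by (simp add: gauss_prod_def PM_def)

lemma prob_NM: "prob_space (NM m)" by (rule prob_space_normal_density) simp

lemma space_NM[simp]: "space (NM m) = UNIV" by simp
lemma sets_NM[simp]: "sets (NM m) = sets borel" by simp

lemma psf_NM: "product_sigma_finite (\<lambda>i. NM (m i))"
  unfolding product_sigma_finite_def
  using prob_NM prob_space_imp_sigma_finite by blast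

lemma prob_PM: "prob_space (PM n m)"
  unfolding PM_def by (rule prob_space_PiM) (rule prob_NM)

lemma sets_PM: "sets (PM n m) = sets (PiM {..<n} (\<lambda>_. borel))"
  unfolding PM_def by (rule sets_PiM_cong) auto

lemma space_PM: "space (PM n m) = Pi\<^sub>E {..<n} (\<lambda>_. UNIV)"
  unfolding PM_def by (simp add: space_PiM)

lemma pre_borel: "A \<in> sets borel \<Longrightarrow> (\<lambda>y::real. y + c) -` A \<in> sets borel"
  using measurable_sets[OF _ , of "\<lambda>y::real. y + c" borel borel A] by simp

lemma NM_shift_emeasure:
  assumes A: "A \<in> sets borel"
  shows "emeasure (NM \<mu>) ((\<lambda>y. y + c) -` A) = emeasure (NM (\<mu> + c)) A"
proof -
  have m: "(\<lambda>y::real. y + c) -` A \<in> sets borel"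
    using measurable_sets[OF _ A, of "\<lambda>y::real. y + c" borel] by simp
  have "emeasure (NM (\<mu> + c)) A = (\<integral>\<^sup>+ y. ennreal (normal_density (\<mu>+c) 1 y) * indicator A y \<partial>lborel)"
    using A by (simp add: emeasure_density)
  also have "\<dots> = (\<integral>\<^sup>+ x. ennreal (normal_density (\<mu>+c) 1 (c + x)) * indicator A (c + x) \<partial>lborel)"
    using A by (subst nn_integral_real_affine[where c=1 and t=c]) auto
  also have "\<dots> = (\<integral>\<^sup>+ x. ennreal (normal_density \<mu> 1 x) * indicator ((\<lambda>y. y + c) -` A) x \<partial>lborel)"
    by (intro nn_integral_cong) (simp add: normal_density_def add.commute split: split_indicator)
  also have "\<dots> = emeasure (NM \<mu>) ((\<lambda>y. y + c) -` A)"
    using m by (simp add: emeasure_density)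
  finally show ?thesis ..
qed

lemma nd_ell: "normal_density \<nu> 1 y * ell a \<nu> y = normal_density (\<nu> + a) 1 y"
proof -
  have "exp (- (y - \<nu>)\<^sup>2 / 2) * exp (a * (y - \<nu>) - a\<^sup>2 / 2) = exp (- (y - (\<nu> + a))\<^sup>2 / 2)"
    by (simp add: exp_add[symmetric] power2_eq_square field_simps)
  then show ?thesis by (simp add: normal_density_def ell_def)
qed

lemma NM_density_ell: "density (NM \<nu>) (\<lambda>y. ennreal (ell a \<nu> y)) = NM (\<nu> + a)"
  by (subst density_density_eq) (auto simp: ennreal_mult'[symmetric] nd_ell)

lemma ell_mult: "ell a \<nu> y * ell b \<nu> y = exp (a * b) * ell (a + b) \<nu> y"
  by (simp add: ell_def exp_add[symmetric] power2_eq_square field_simps)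

lemma NM_int_ell: "(\<integral>\<^sup>+ y. ennreal (ell a \<nu> y) \<partial>NM \<nu>) = 1"
proof -
  have "(\<integral>\<^sup>+ y. ennreal (ell a \<nu> y) \<partial>NM \<nu>) = emeasure (density (NM \<nu>) (\<lambda>y. ennreal (ell a \<nu> y))) (space (NM \<nu>))"
    by (subst emeasure_density) auto
  also have "\<dots> = emeasure (NM (\<nu> + a)) (space (NM (\<nu> + a)))"
    by (simp add: NM_density_ell)
  also have "\<dots> = 1" using prob_space.emeasure_space_1[OF prob_NM] by simp
  finally show ?thesis .
qed

lemma NM_int_ell2: "(\<integral>\<^sup>+ y. ennreal (ell a \<nu> y * ell b \<nu> y) \<partial>NM \<nu>) = ennreal (exp (a * b))"
proof -
  have "(\<integral>\<^sup>+ y. ennreal (ell a \<nu> y * ell b \<nu> y) \<partial>NM \<nu>) = (\<integral>\<^sup>+ y. ennreal (exp (a*b)) * ennreal (ell (a+b) \<nu> y) \<partial>NM \<nu>)"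
    by (intro nn_integral_cong) (simp add: ell_mult ennreal_mult' ell_pos less_imp_le)
  also have "\<dots> = ennreal (exp (a*b)) * (\<integral>\<^sup>+ y. ennreal (ell (a+b) \<nu> y) \<partial>NM \<nu>)"
    by (rule nn_integral_cmult) auto
  also have "\<dots> = ennreal (exp (a*b))" by (simp add: NM_int_ell)
  finally show ?thesis .
qed

lemma PM_eqI:
  assumes sets: "sets X = sets (PM n m)"
  assumes eq: "\<And>A. (\<And>i. i \<in> {..<n} \<Longrightarrow> A i \<in> sets borel) \<Longrightarrow>
      emeasure X (Pi\<^sub>E {..<n} A) = (\<Prod>i\<in>{..<n}. emeasure (NM (m i)) (A i))"
  shows "X = PM n m"
  unfolding PM_def
  by (rule product_sigma_finite.PiM_eqI[OF psf_NM]) (use sets eq in \<open>auto simp: PM_def\<close>)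

lemma shift_PM:
  "distr (gauss_prod n \<mu>) (gauss_prod n \<mu>) (\<lambda>x. \<lambda>i\<in>{..<n}. x i + c i) = PM n (\<lambda>i. \<mu> + c i)"
proof (rule PM_eqI)
  have meas: "(\<lambda>x. \<lambda>i\<in>{..<n}. x i + c i) \<in> measurable (gauss_prod n \<mu>) (gauss_prod n \<mu>)"
    unfolding gauss_prod_def by measurable
  show "sets (distr (gauss_prod n \<mu>) (gauss_prod n \<mu>) (\<lambda>x. \<lambda>i\<in>{..<n}. x i + c i)) = sets (PM n (\<lambda>i. \<mu> + c i))"
    by (simp add: gauss_prod_PM sets_PM)
  fix A :: "nat \<Rightarrow> real set" assume A: "\<And>i. i \<in> {..<n} \<Longrightarrow> A i \<in> sets borel"
  have AS: "Pi\<^sub>E {..<n} A \<in> sets (gauss_prod n \<mu>)"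
    unfolding gauss_prod_def using A by (intro sets_PiM_I_finite) auto
  have pre: "(\<lambda>x. \<lambda>i\<in>{..<n}. x i + c i) -` Pi\<^sub>E {..<n} A \<inter> space (gauss_prod n \<mu>)
      = Pi\<^sub>E {..<n} (\<lambda>i. (\<lambda>y. y + c i) -` A i)"
    by (auto simp: gauss_prod_def space_PiM PiE_iff)
  have "emeasure (distr (gauss_prod n \<mu>) (gauss_prod n \<mu>) (\<lambda>x. \<lambda>i\<in>{..<n}. x i + c i)) (Pi\<^sub>E {..<n} A)
      = emeasure (gauss_prod n \<mu>) (Pi\<^sub>E {..<n} (\<lambda>i. (\<lambda>y. y + c i) -` A i))"
    by (subst emeasure_distr[OF meas AS]) (simp add: pre)
  also have "\<dots> = (\<Prod>i\<in>{..<n}. emeasure (NM \<mu>) ((\<lambda>y. y + c i) -` A i))"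
    unfolding gauss_prod_def
    using A pre_borel by (intro product_sigma_finite.emeasure_PiM[OF psf_NM[of "\<lambda>_. \<mu>"]]) auto
  also have "\<dots> = (\<Prod>i\<in>{..<n}. emeasure (NM (\<mu> + c i)) (A i))"
    using A by (intro prod.cong refl NM_shift_emeasure) auto
  finally show "emeasure (distr (gauss_prod n \<mu>) (gauss_prod n \<mu>) (\<lambda>x. \<lambda>i\<in>{..<n}. x i + c i)) (Pi\<^sub>E {..<n} A)
      = (\<Prod>i\<in>{..<n}. emeasure (NM (\<mu> + c i)) (A i))" .
qed

lemma density_PM:
  "density (gauss_prod n \<nu>) (\<lambda>x. \<Prod>i\<in>{..<n}. ennreal (ell (a i) \<nu> (x i))) = PM n (\<lambda>i. \<nu> + a i)"
proof (rule PM_eqI)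
  show "sets (density (gauss_prod n \<nu>) (\<lambda>x. \<Prod>i\<in>{..<n}. ennreal (ell (a i) \<nu> (x i)))) = sets (PM n (\<lambda>i. \<nu> + a i))"
    by (simp add: gauss_prod_PM sets_PM)
  fix A :: "nat \<Rightarrow> real set" assume A: "\<And>i. i \<in> {..<n} \<Longrightarrow> A i \<in> sets borel"
  have AS: "Pi\<^sub>E {..<n} A \<in> sets (gauss_prod n \<nu>)"
    unfolding gauss_prod_def using A by (intro sets_PiM_I_finite) auto
  have "emeasure (density (gauss_prod n \<nu>) (\<lambda>x. \<Prod>i\<in>{..<n}. ennreal (ell (a i) \<nu> (x i)))) (Pi\<^sub>E {..<n} A)
     = (\<integral>\<^sup>+ x. (\<Prod>i\<in>{..<n}. ennreal (ell (a i) \<nu> (x i))) * indicator (Pi\<^sub>E {..<n} A) x \<partial>gauss_prod n \<nu>)"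
    using AS by (subst emeasure_density) (auto simp: gauss_prod_def)
  also have "\<dots> = (\<integral>\<^sup>+ x. (\<Prod>i\<in>{..<n}. ennreal (ell (a i) \<nu> (x i)) * indicator (A i) (x i)) \<partial>gauss_prod n \<nu>)"
  proof (intro nn_integral_cong)
    fix x assume "x \<in> space (gauss_prod n \<nu>)"
    then have ext: "x \<in> extensional {..<n}" by (auto simp: gauss_prod_def space_PiM PiE_def)
    show "(\<Prod>i\<in>{..<n}. ennreal (ell (a i) \<nu> (x i))) * indicator (Pi\<^sub>E {..<n} A) x
        = (\<Prod>i\<in>{..<n}. ennreal (ell (a i) \<nu> (x i)) * indicator (A i) (x i))"
    proof (cases "x \<in> Pi\<^sub>E {..<n} A")
      case True then show ?thesis by (auto simp: prod.distrib PiE_iff)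
    next
      case False
      then obtain j where j: "j < n" "x j \<notin> A j" using ext by (auto simp: PiE_iff)
      then have "(\<Prod>i\<in>{..<n}. ennreal (ell (a i) \<nu> (x i)) * indicator (A i) (x i)) = 0"
        by (intro prod_zero) (auto intro!: bexI[of _ j])
      then show ?thesis using False by simp
    qed
  qed
  also have "\<dots> = (\<Prod>i\<in>{..<n}. \<integral>\<^sup>+ y. ennreal (ell (a i) \<nu> y) * indicator (A i) y \<partial>NM \<nu>)"
    unfolding gauss_prod_def
    using A by (intro product_sigma_finite.product_nn_integral_prod[OF psf_NM[of "\<lambda>_. \<nu>"]]) auto
  also have "\<dots> = (\<Prod>i\<in>{..<n}. emeasure (density (NM \<nu>) (\<lambda>y. ennreal (ell (a i) \<nu> y))) (A i))"
    using A by (intro prod.cong refl) (simp add: emeasure_density)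
  also have "\<dots> = (\<Prod>i\<in>{..<n}. emeasure (NM (\<nu> + a i)) (A i))"
    by (simp add: NM_density_ell)
  finally show "emeasure (density (gauss_prod n \<nu>) (\<lambda>x. \<Prod>i\<in>{..<n}. ennreal (ell (a i) \<nu> (x i)))) (Pi\<^sub>E {..<n} A)
     = (\<Prod>i\<in>{..<n}. emeasure (NM (\<nu> + a i)) (A i))" .
qed

lemma int_PM_prod2:
  "(\<integral>\<^sup>+ x. ennreal ((\<Prod>i\<in>{..<n}. ell (a i) \<nu> (x i)) * (\<Prod>i\<in>{..<n}. ell (b i) \<nu> (x i))) \<partial>gauss_prod n \<nu>)
   = ennreal (exp (\<Sum>i\<in>{..<n}. a i * b i))"
proof -
  have "(\<integral>\<^sup>+ x. ennreal ((\<Prod>i\<in>{..<n}. ell (a i) \<nu> (x i)) * (\<Prod>i\<in>{..<n}. ell (b i) \<nu> (x i))) \<partial>gauss_prod n \<nu>)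
     = (\<integral>\<^sup>+ x. (\<Prod>i\<in>{..<n}. ennreal (ell (a i) \<nu> (x i) * ell (b i) \<nu> (x i))) \<partial>gauss_prod n \<nu>)"
    by (intro nn_integral_cong) (simp add: prod.distrib[symmetric] prod_ennreal ell_pos less_imp_le)
  also have "\<dots> = (\<Prod>i\<in>{..<n}. \<integral>\<^sup>+ y. ennreal (ell (a i) \<nu> y * ell (b i) \<nu> y) \<partial>NM \<nu>)"
    unfolding gauss_prod_def
    by (intro product_sigma_finite.product_nn_integral_prod[OF psf_NM[of "\<lambda>_. \<nu>"]]) auto
  also have "\<dots> = (\<Prod>i\<in>{..<n}. ennreal (exp (a i * b i)))"
    by (simp add: NM_int_ell2)
  also have "\<dots> = ennreal (exp (\<Sum>i\<in>{..<n}. a i * b i))"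
    by (simp add: prod_ennreal exp_sum)
  finally show ?thesis .
qed




lemma meas_LI[measurable]:
  "(\<lambda>x. \<Prod>i\<in>{..<n}. ell (a i) \<nu> (x i)) \<in> borel_measurable (gauss_prod n \<mu>)"
  unfolding gauss_prod_def by measurable

lemma pred_snd_mem[measurable]: "Measurable.pred (M \<Otimes>\<^sub>M count_space UNIV) (\<lambda>x. i \<in> snd x)"
  by (rule measurable_compose[OF measurable_snd]) simp

lemma Q_eq:
  fixes n k :: nat and \<mu>' \<delta> \<nu> :: real
  assumes S_def: "S = {I. I \<subseteq> {..<n} \<and> card I = k}"
    and kn: "k \<le> n"
    and aI_def: "\<And>I i. \<nu> + aI I i = \<mu>' + \<delta> * indicator I i"
  shows "planted_law n k \<mu>' \<delta> = density (gauss_prod n \<nu>)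
     (\<lambda>x. ennreal ((\<Sum>I\<in>S. \<Prod>i\<in>{..<n}. ell (aI I i) \<nu> (x i)) / real (card S)))"
proof -
  define R where "R = measure_pmf (rand_subset n k)"
  define P' where "P' = gauss_prod n \<mu>'"
  define P where "P = gauss_prod n \<nu>"
  define g where "g = (\<lambda>(x :: nat \<Rightarrow> real, I :: nat set). \<lambda>i\<in>{..<n}. x i + \<delta> * indicator I i)"
  have fS: "finite S" unfolding S_def by simp
  have neS: "S \<noteq> {}" unfolding S_def using kn by (auto intro!: exI[of _ "{..<k}"])
  have NS: "real (card S) > 0" using fS neS by (simp add: card_gt_0_iff)
  have setR: "set_pmf (rand_subset n k) = S" unfolding rand_subset_def S_def[symmetric]
    using fS neS by simp
  have pmfR: "\<And>I. I \<in> S \<Longrightarrow> pmf (rand_subset n k) I = 1 / real (card S)"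
    unfolding rand_subset_def S_def[symmetric] using fS neS by simp
  have gmeas: "g \<in> measurable (P' \<Otimes>\<^sub>M R) P'"
    unfolding g_def P'_def gauss_prod_def R_def by measurable
  have LI_eq: "\<And>I. density P (\<lambda>x. \<Prod>i\<in>{..<n}. ennreal (ell (aI I i) \<nu> (x i)))
       = distr P' P' (\<lambda>x. \<lambda>i\<in>{..<n}. x i + \<delta> * indicator I i)"
    unfolding P_def P'_def by (simp add: density_PM shift_PM aI_def)
  have sigR: "sigma_finite_measure R" unfolding R_def
    by (rule prob_space_imp_sigma_finite) (rule prob_space_measure_pmf)
  have setsP: "sets P = sets P'" unfolding P_def P'_def gauss_prod_PM sets_PM ..
  show ?thesis
    unfolding planted_law_def P'_def[symmetric] R_def[symmetric] g_def[symmetric] P_def[symmetric]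
  proof (rule measure_eqI)
    show "sets (distr (P' \<Otimes>\<^sub>M R) P' g) = sets (density P (\<lambda>x. ennreal ((\<Sum>I\<in>S. \<Prod>i\<in>{..<n}. ell (aI I i) \<nu> (x i)) / real (card S))))"
      using setsP by simp
    fix A assume "A \<in> sets (distr (P' \<Otimes>\<^sub>M R) P' g)"
    then have A: "A \<in> sets P'" by simp
    then have AP: "A \<in> sets P" using setsP by simp
    have "emeasure (distr (P' \<Otimes>\<^sub>M R) P' g) A = (\<integral>\<^sup>+ y. indicator A y \<partial>distr (P' \<Otimes>\<^sub>M R) P' g)"
      using A by simp
    also have "\<dots> = (\<integral>\<^sup>+ z. indicator A (g z) \<partial>(P' \<Otimes>\<^sub>M R))"
      using A gmeas by (intro nn_integral_distr) auto
    also have "\<dots> = (\<integral>\<^sup>+ x. \<integral>\<^sup>+ I. indicator A (g (x, I)) \<partial>R \<partial>P')"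
      using A gmeas by (intro sigma_finite_measure.nn_integral_fst[OF sigR, symmetric]) auto
    also have "\<dots> = (\<integral>\<^sup>+ x. (\<Sum>I\<in>S. ennreal (1 / real (card S)) * indicator A (g (x, I))) \<partial>P')"
    proof (intro nn_integral_cong)
      fix x
      have "(\<integral>\<^sup>+ I. indicator A (g (x, I)) \<partial>R) = (\<Sum>I\<in>set_pmf (rand_subset n k). indicator A (g (x, I)) * ennreal (pmf (rand_subset n k) I))"
        unfolding R_def using fS setR by (intro nn_integral_measure_pmf_finite) auto
      also have "\<dots> = (\<Sum>I\<in>S. ennreal (1 / real (card S)) * indicator A (g (x, I)))"
        using setR pmfR by (auto simp: mult.commute intro!: sum.cong)
      finally show "(\<integral>\<^sup>+ I. indicator A (g (x, I)) \<partial>R) = (\<Sum>I\<in>S. ennreal (1 / real (card S)) * indicator A (g (x, I)))" .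
    qed
    also have "\<dots> = (\<Sum>I\<in>S. ennreal (1 / real (card S)) * \<integral>\<^sup>+ x. indicator A (g (x, I)) \<partial>P')"
    proof -
      have m: "\<And>I. (\<lambda>x. \<lambda>i\<in>{..<n}. x i + \<delta> * indicator I i) \<in> measurable P' P'"
        unfolding P'_def gauss_prod_def by measurable
      have "\<And>I. (\<lambda>x. indicator A (g (x, I))) \<in> borel_measurable P'"
        unfolding g_def using m A by simp
      note [measurable] = this
      show ?thesis
        by (subst nn_integral_sum) (auto intro!: sum.cong nn_integral_cmult)
    qed
    also have "\<dots> = (\<Sum>I\<in>S. ennreal (1 / real (card S)) * emeasure (density P (\<lambda>x. \<Prod>i\<in>{..<n}. ennreal (ell (aI I i) \<nu> (x i)))) A)"
    proof (intro sum.cong refl arg_cong2[where f="(*)"])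
      fix I
      have m: "(\<lambda>x. \<lambda>i\<in>{..<n}. x i + \<delta> * indicator I i) \<in> measurable P' P'"
        unfolding P'_def gauss_prod_def by measurable
      have "(\<integral>\<^sup>+ x. indicator A (g (x, I)) \<partial>P') = (\<integral>\<^sup>+ y. indicator A y \<partial>distr P' P' (\<lambda>x. \<lambda>i\<in>{..<n}. x i + \<delta> * indicator I i))"
        unfolding g_def using m A by (subst nn_integral_distr) auto
      also have "\<dots> = emeasure (distr P' P' (\<lambda>x. \<lambda>i\<in>{..<n}. x i + \<delta> * indicator I i)) A"
        using A by simp
      finally show "(\<integral>\<^sup>+ x. indicator A (g (x, I)) \<partial>P') = emeasure (density P (\<lambda>x. \<Prod>i\<in>{..<n}. ennreal (ell (aI I i) \<nu> (x i)))) A"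
        by (simp add: LI_eq)
    qed
    also have "\<dots> = (\<Sum>I\<in>S. \<integral>\<^sup>+ x. ennreal (1 / real (card S)) * (ennreal (\<Prod>i\<in>{..<n}. ell (aI I i) \<nu> (x i)) * indicator A x) \<partial>P)"
      using AP unfolding P_def
      by (intro sum.cong refl) (simp add: emeasure_density nn_integral_cmult prod_ennreal ell_pos less_imp_le)
    also have "\<dots> = (\<integral>\<^sup>+ x. (\<Sum>I\<in>S. ennreal (1 / real (card S)) * (ennreal (\<Prod>i\<in>{..<n}. ell (aI I i) \<nu> (x i)) * indicator A x)) \<partial>P)"
      using AP unfolding P_def by (subst nn_integral_sum) auto
    also have "\<dots> = (\<integral>\<^sup>+ x. ennreal ((\<Sum>I\<in>S. \<Prod>i\<in>{..<n}. ell (aI I i) \<nu> (x i)) / real (card S)) * indicator A x \<partial>P)"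
    proof (intro nn_integral_cong)
      fix x
      have e: "\<And>I. ennreal (1 / real (card S)) * (ennreal (\<Prod>i\<in>{..<n}. ell (aI I i) \<nu> (x i)) * indicator A x)
          = ennreal ((\<Prod>i\<in>{..<n}. ell (aI I i) \<nu> (x i)) / real (card S)) * indicator A x"
      proof -
        fix I
        have "ennreal (1 / real (card S)) * ennreal (\<Prod>i\<in>{..<n}. ell (aI I i) \<nu> (x i))
            = ennreal (1 / real (card S) * (\<Prod>i\<in>{..<n}. ell (aI I i) \<nu> (x i)))"
          by (rule ennreal_mult[symmetric]) (auto simp: prod_nonneg ell_pos less_imp_le)
        then show "ennreal (1 / real (card S)) * (ennreal (\<Prod>i\<in>{..<n}. ell (aI I i) \<nu> (x i)) * indicator A x)
          = ennreal ((\<Prod>i\<in>{..<n}. ell (aI I i) \<nu> (x i)) / real (card S)) * indicator A x"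
          by (simp add: mult.assoc[symmetric])
      qed
      have "(\<Sum>I\<in>S. ennreal (1 / real (card S)) * (ennreal (\<Prod>i\<in>{..<n}. ell (aI I i) \<nu> (x i)) * indicator A x))
          = (\<Sum>I\<in>S. ennreal ((\<Prod>i\<in>{..<n}. ell (aI I i) \<nu> (x i)) / real (card S))) * indicator A x"
        by (simp only: e sum_distrib_right)
      also have "\<dots> = ennreal ((\<Sum>I\<in>S. \<Prod>i\<in>{..<n}. ell (aI I i) \<nu> (x i)) / real (card S)) * indicator A x"
        by (subst sum_ennreal) (auto simp: prod_nonneg ell_pos less_imp_le sum_divide_distrib)
      finally show "(\<Sum>I\<in>S. ennreal (1 / real (card S)) * (ennreal (\<Prod>i\<in>{..<n}. ell (aI I i) \<nu> (x i)) * indicator A x))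
          = ennreal ((\<Sum>I\<in>S. \<Prod>i\<in>{..<n}. ell (aI I i) \<nu> (x i)) / real (card S)) * indicator A x" .
    qed
    also have "\<dots> = emeasure (density P (\<lambda>x. ennreal ((\<Sum>I\<in>S. \<Prod>i\<in>{..<n}. ell (aI I i) \<nu> (x i)) / real (card S)))) A"
      using AP unfolding P_def by (subst emeasure_density) auto
    finally show "emeasure (distr (P' \<Otimes>\<^sub>M R) P' g) A = emeasure (density P (\<lambda>x. ennreal ((\<Sum>I\<in>S. \<Prod>i\<in>{..<n}. ell (aI I i) \<nu> (x i)) / real (card S)))) A" .
  qed
qed




lemma sum_ind_real: "finite A \<Longrightarrow> (\<Sum>i\<in>A. indicator B i :: real) = real (card (A \<inter> B))"
  by (simp add: indicator_def sum.If_cases Int_def)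

lemma exponent_eq:
  fixes \<delta> :: real
  assumes I: "I \<subseteq> {..<n}" "card I = k" and J: "J \<subseteq> {..<n}" "card J = k" and n: "0 < n"
  shows "(\<Sum>i\<in>{..<n}. (\<delta> * indicator I i - real k / real n * \<delta>) * (\<delta> * indicator J i - real k / real n * \<delta>))
     = \<delta>\<^sup>2 * (real (card (I \<inter> J)) - (real k)\<^sup>2 / real n)"
proof -
  let ?\<eta> = "real k / real n"
  have e: "\<And>i. (\<delta> * indicator I i - ?\<eta> * \<delta>) * (\<delta> * indicator J i - ?\<eta> * \<delta>)
      = \<delta>\<^sup>2 * (indicator (I \<inter> J) i - ?\<eta> * indicator I i - ?\<eta> * indicator J i + ?\<eta>\<^sup>2)"
    by (simp add: indicator_def power2_eq_square algebra_simps)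
  have s1: "(\<Sum>i\<in>{..<n}. (indicator (I \<inter> J) i :: real)) = real (card (I \<inter> J))"
    using I by (subst sum_ind_real) (auto intro!: arg_cong[where f=card])
  have s2: "(\<Sum>i\<in>{..<n}. (indicator I i :: real)) = real k"
    using I by (subst sum_ind_real) (auto simp: Int_absorb1 inf.absorb2)
  have s3: "(\<Sum>i\<in>{..<n}. (indicator J i :: real)) = real k"
    using J by (subst sum_ind_real) (auto simp: Int_absorb1 inf.absorb2)
  have "(\<Sum>i\<in>{..<n}. (\<delta> * indicator I i - ?\<eta> * \<delta>) * (\<delta> * indicator J i - ?\<eta> * \<delta>))
      = \<delta>\<^sup>2 * ((\<Sum>i\<in>{..<n}. indicator (I \<inter> J) i) - ?\<eta> * (\<Sum>i\<in>{..<n}. indicator I i)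
          - ?\<eta> * (\<Sum>i\<in>{..<n}. indicator J i) + real n * ?\<eta>\<^sup>2)"
    by (simp only: e sum_distrib_left[symmetric] sum.distrib sum_subtractf) (simp add: sum_distrib_left)
  also have "\<dots> = \<delta>\<^sup>2 * (real (card (I \<inter> J)) - (real k)\<^sup>2 / real n)"
    using n by (simp add: s1 s2 s3 power2_eq_square field_simps)
  finally show ?thesis .
qed

lemma B_bound:
  fixes \<delta> :: real
  assumes k1: "1 \<le> k" and kn: "k \<le> n" and d: "\<delta> \<ge> 0"
    and S_def: "S = {I. I \<subseteq> {..<n} \<and> card I = k}"
  shows "(\<Sum>I\<in>S. \<Sum>J\<in>S. exp (\<Sum>i\<in>{..<n}. (\<delta> * indicator I i - real k / real n * \<delta>) * (\<delta> * indicator J i - real k / real n * \<delta>)))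
      / (real (card S))\<^sup>2 \<le> exp ((real k)\<^sup>2 / real n * (exp (\<delta>\<^sup>2) - 1 - \<delta>\<^sup>2))"
proof -
  have n: "0 < n" using k1 kn by simp
  define c where "c = exp (\<delta>\<^sup>2) - 1"
  have c0: "c \<ge> 0" unfolding c_def by simp
  define K where "K = exp (- \<delta>\<^sup>2 * (real k)\<^sup>2 / real n)"
  have fS: "finite S" unfolding S_def by simp
  have neS: "S \<noteq> {}" unfolding S_def using kn by (auto intro!: exI[of _ "{..<k}"])
  have NS: "real (card S) > 0" using fS neS by (simp add: card_gt_0_iff)
  have trm: "exp (\<Sum>i\<in>{..<n}. (\<delta> * indicator I i - real k / real n * \<delta>) * (\<delta> * indicator J i - real k / real n * \<delta>))
      = K * (1 + c) ^ card (I \<inter> J)" if "I \<in> S" "J \<in> S" for I J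
  proof -
    have "exp (\<Sum>i\<in>{..<n}. (\<delta> * indicator I i - real k / real n * \<delta>) * (\<delta> * indicator J i - real k / real n * \<delta>))
        = exp (real (card (I \<inter> J)) * \<delta>\<^sup>2 + (- \<delta>\<^sup>2 * (real k)\<^sup>2 / real n))"
      using that n by (subst exponent_eq[of I n k J]) (auto simp: S_def algebra_simps)
    also have "\<dots> = K * (1 + c) ^ card (I \<inter> J)"
      unfolding K_def c_def by (simp add: exp_of_nat_mult[symmetric] exp_add[symmetric])
    finally show ?thesis .
  qed
  have "(\<Sum>I\<in>S. \<Sum>J\<in>S. exp (\<Sum>i\<in>{..<n}. (\<delta> * indicator I i - real k / real n * \<delta>) * (\<delta> * indicator J i - real k / real n * \<delta>)))
      = K * (\<Sum>I\<in>S. \<Sum>J\<in>S. (1 + c) ^ card (I \<inter> J))"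
    by (simp only: sum_distrib_left) (intro sum.cong refl trm)
  also have "\<dots> \<le> K * (\<Sum>I\<in>S. real (card S) * (1 + c * (real k / real n)) ^ k)"
  proof (intro mult_left_mono sum_mono)
    fix I assume "I \<in> S"
    then show "(\<Sum>J\<in>S. (1 + c) ^ card (I \<inter> J)) \<le> real (card S) * (1 + c * (real k / real n)) ^ k"
      unfolding S_def using hyper_mgf_bound[OF c0 _ _ kn n] by auto
  qed (simp add: K_def)
  also have "\<dots> = K * (real (card S))\<^sup>2 * (1 + c * (real k / real n)) ^ k"
    by (simp add: power2_eq_square)
  also have "\<dots> \<le> K * (real (card S))\<^sup>2 * exp (c * (real k / real n)) ^ k"
    using c0 by (intro mult_left_mono power_mono) (auto simp: K_def exp_ge_add_one_self)
  finally have "(\<Sum>I\<in>S. \<Sum>J\<in>S. exp (\<Sum>i\<in>{..<n}. (\<delta> * indicator I i - real k / real n * \<delta>) * (\<delta> * indicator J i - real k / real n * \<delta>)))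
      / (real (card S))\<^sup>2 \<le> K * exp (c * (real k / real n)) ^ k"
    using NS by (simp add: divide_le_eq mult_ac)
  also have "K * exp (c * (real k / real n)) ^ k = exp ((real k)\<^sup>2 / real n * (exp (\<delta>\<^sup>2) - 1 - \<delta>\<^sup>2))"
  proof -
    have "K * exp (c * (real k / real n)) ^ k = exp (- \<delta>\<^sup>2 * (real k)\<^sup>2 / real n + real k * (c * (real k / real n)))"
      unfolding K_def by (simp only: exp_of_nat_mult exp_add)
    also have "- \<delta>\<^sup>2 * (real k)\<^sup>2 / real n + real k * (c * (real k / real n)) = (real k)\<^sup>2 / real n * (exp (\<delta>\<^sup>2) - 1 - \<delta>\<^sup>2)"
      unfolding c_def using n by (simp add: power2_eq_square divide_simps) (simp add: algebra_simps)
    finally show ?thesis .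
  qed
  finally show ?thesis .
qed

lemma prob_Q: "prob_space (planted_law n k \<mu> \<delta>)"
  unfolding planted_law_def
proof (rule prob_space.prob_space_distr)
  show "prob_space (gauss_prod n \<mu> \<Otimes>\<^sub>M measure_pmf (rand_subset n k))"
    by (intro prob_space_pair prob_space_measure_pmf) (simp add: gauss_prod_PM prob_PM)
  show "(\<lambda>(x, I). \<lambda>i\<in>{..<n}. x i + \<delta> * indicator I i) \<in> measurable (gauss_prod n \<mu> \<Otimes>\<^sub>M measure_pmf (rand_subset n k)) (gauss_prod n \<mu>)"
    unfolding gauss_prod_def by measurable
qed

theorem lemmaG1:
  fixes n k :: nat and \<mu>' \<delta> :: real
  assumes "1 \<le> k" and "k \<le> n" and "\<delta> \<ge> 0"
  shows "chi2_div (planted_law n k \<mu>' \<delta>) (gauss_prod n (\<mu>' + (real k / real n) * \<delta>))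
           \<le> ennreal (exp ((real k)\<^sup>2 / real n * (exp (\<delta>\<^sup>2) - 1 - \<delta>\<^sup>2)) - 1)"
proof -
  note k1 = assms(1) and kn = assms(2) and d = assms(3)
  have n: "0 < n" using k1 kn by simp
  define \<nu> where "\<nu> = \<mu>' + (real k / real n) * \<delta>"
  define S where "S = {I. I \<subseteq> {..<n} \<and> card I = k}"
  define aI :: "nat set \<Rightarrow> nat \<Rightarrow> real" where "aI = (\<lambda>I i. \<delta> * indicator I i - real k / real n * \<delta>)"
  define LI :: "nat set \<Rightarrow> (nat \<Rightarrow> real) \<Rightarrow> real" where "LI = (\<lambda>I x. \<Prod>i\<in>{..<n}. ell (aI I i) \<nu> (x i))"
  define N where "N = real (card S)"
  define f :: "(nat \<Rightarrow> real) \<Rightarrow> real" where "f = (\<lambda>x. (\<Sum>I\<in>S. LI I x) / N)"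
  define P where "P = gauss_prod n \<nu>"
  define Q where "Q = planted_law n k \<mu>' \<delta>"
  define E where "E = exp ((real k)\<^sup>2 / real n * (exp (\<delta>\<^sup>2) - 1 - \<delta>\<^sup>2))"
  define B where "B = (\<Sum>I\<in>S. \<Sum>J\<in>S. exp (\<Sum>i\<in>{..<n}. aI I i * aI J i)) / N\<^sup>2"
  have fS: "finite S" unfolding S_def by simp
  have neS: "S \<noteq> {}" unfolding S_def using kn by (auto intro!: exI[of _ "{..<k}"])
  have NS: "N > 0" unfolding N_def using fS neS by (simp add: card_gt_0_iff)
  have LI0: "\<And>I x. LI I x \<ge> 0" unfolding LI_def by (auto intro!: prod_nonneg simp: ell_pos less_imp_le)
  have f0: "\<And>x. f x \<ge> 0" unfolding f_def using NS LI0 by (auto intro!: sum_nonneg divide_nonneg_pos)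
  have Qeq: "Q = density P (\<lambda>x. ennreal (f x))"
    unfolding Q_def P_def f_def LI_def N_def
    by (rule Q_eq[OF S_def kn]) (simp add: \<nu>_def aI_def)
  have LImeas[measurable]: "\<And>I. LI I \<in> borel_measurable P" unfolding LI_def P_def by measurable
  have fmeas[measurable]: "f \<in> borel_measurable P" unfolding f_def by measurable
  have probP: "prob_space P" unfolding P_def gauss_prod_PM by (rule prob_PM)
  have sfP: "sigma_finite_measure P" by (rule prob_space_imp_sigma_finite[OF probP])
  have setsQ: "sets Q = sets P" unfolding Qeq by simp
  have ac: "absolutely_continuous P Q" unfolding Qeq by (rule absolutely_continuousI_density) measurable
  have AE: "AE x in P. ennreal (f x) = RN_deriv P Q x"
    by (rule sigma_finite_measure.RN_deriv_unique[OF sfP _ Qeq[symmetric]]) measurable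
  have chi: "chi2_div Q P = (\<integral>\<^sup>+ x. ennreal ((f x - 1)\<^sup>2) \<partial>P)"
  proof -
    have "AE x in P. ennreal ((enn2real (RN_deriv P Q x) - 1)\<^sup>2) = ennreal ((f x - 1)\<^sup>2)"
      using AE by eventually_elim (metis enn2real_ennreal f0)
    then show ?thesis unfolding chi2_div_def using ac setsQ by (simp add: nn_integral_cong_AE)
  qed
  have F1: "(\<integral>\<^sup>+ x. ennreal (f x) \<partial>P) = 1"
  proof -
    have "(\<integral>\<^sup>+ x. ennreal (f x) \<partial>P) = emeasure Q (space P)"
      unfolding Qeq by (subst emeasure_density) (auto intro!: nn_integral_cong)
    also have "space P = space Q" using setsQ by (metis sets_eq_imp_space_eq)
    also have "emeasure Q (space Q) = 1" unfolding Q_def by (rule prob_space.emeasure_space_1[OF prob_Q])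
    finally show ?thesis .
  qed
  have F2: "(\<integral>\<^sup>+ x. ennreal ((f x)\<^sup>2) \<partial>P) = ennreal B"
  proof -
    have pt: "ennreal ((f x)\<^sup>2) = (\<Sum>I\<in>S. \<Sum>J\<in>S. ennreal (1 / N\<^sup>2) * ennreal (LI I x * LI J x))" for x
    proof -
      have "(f x)\<^sup>2 = (\<Sum>I\<in>S. \<Sum>J\<in>S. 1 / N\<^sup>2 * (LI I x * LI J x))"
      proof -
        have "(f x)\<^sup>2 = (\<Sum>I\<in>S. LI I x) * (\<Sum>J\<in>S. LI J x) * (1 / N\<^sup>2)"
          unfolding f_def by (simp add: power2_eq_square)
        also have "\<dots> = (\<Sum>I\<in>S. \<Sum>J\<in>S. LI I x * LI J x) * (1 / N\<^sup>2)"
          by (simp only: sum_product)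
        also have "\<dots> = (\<Sum>I\<in>S. \<Sum>J\<in>S. 1 / N\<^sup>2 * (LI I x * LI J x))"
          by (subst mult.commute) (simp only: sum_distrib_left)
        finally show ?thesis .
      qed
      then have "ennreal ((f x)\<^sup>2) = (\<Sum>I\<in>S. \<Sum>J\<in>S. ennreal (1 / N\<^sup>2 * (LI I x * LI J x)))"
        using LI0 by (simp add: sum_nonneg)
      also have "\<dots> = (\<Sum>I\<in>S. \<Sum>J\<in>S. ennreal (1 / N\<^sup>2) * ennreal (LI I x * LI J x))"
        using LI0 by (intro sum.cong refl ennreal_mult) auto
      finally show ?thesis .
    qed
    have "(\<integral>\<^sup>+ x. ennreal ((f x)\<^sup>2) \<partial>P) = (\<integral>\<^sup>+ x. (\<Sum>I\<in>S. \<Sum>J\<in>S. ennreal (1 / N\<^sup>2) * ennreal (LI I x * LI J x)) \<partial>P)"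
      by (simp add: pt)
    also have "\<dots> = (\<Sum>I\<in>S. \<Sum>J\<in>S. ennreal (1 / N\<^sup>2) * (\<integral>\<^sup>+ x. ennreal (LI I x * LI J x) \<partial>P))"
      by (simp add: nn_integral_sum nn_integral_cmult)
    also have "\<dots> = (\<Sum>I\<in>S. \<Sum>J\<in>S. ennreal (1 / N\<^sup>2) * ennreal (exp (\<Sum>i\<in>{..<n}. aI I i * aI J i)))"
      unfolding LI_def P_def by (simp add: int_PM_prod2)
    also have "\<dots> = (\<Sum>I\<in>S. \<Sum>J\<in>S. ennreal (exp (\<Sum>i\<in>{..<n}. aI I i * aI J i) / N\<^sup>2))"
      by (intro sum.cong refl) (simp add: ennreal_mult[symmetric])
    also have "\<dots> = ennreal B"
      unfolding B_def by (simp add: sum_nonneg sum_divide_distrib)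
    finally show ?thesis .
  qed
  have BE: "B \<le> E"
    unfolding B_def E_def aI_def N_def using B_bound[OF k1 kn d S_def] by simp
  have E1: "E \<ge> 1"
  proof -
    have "exp (\<delta>\<^sup>2) - 1 - \<delta>\<^sup>2 \<ge> 0" using exp_ge_add_one_self[of "\<delta>\<^sup>2"] by linarith
    then have "(real k)\<^sup>2 / real n * (exp (\<delta>\<^sup>2) - 1 - \<delta>\<^sup>2) \<ge> 0" by simp
    then show ?thesis unfolding E_def by simp
  qed
  have B0: "B \<ge> 0" unfolding B_def by (intro divide_nonneg_nonneg sum_nonneg) auto
  define X where "X = (\<integral>\<^sup>+ x. ennreal ((f x - 1)\<^sup>2) \<partial>P)"
  have "(\<integral>\<^sup>+ x. ennreal ((f x - 1)\<^sup>2) + ennreal (2 * f x) \<partial>P) = (\<integral>\<^sup>+ x. ennreal ((f x)\<^sup>2) + 1 \<partial>P)"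
  proof (intro nn_integral_cong)
    fix x
    have "ennreal ((f x - 1)\<^sup>2) + ennreal (2 * f x) = ennreal ((f x - 1)\<^sup>2 + 2 * f x)"
      using f0[of x] by (subst ennreal_plus) auto
    also have "(f x - 1)\<^sup>2 + 2 * f x = (f x)\<^sup>2 + 1" by (simp add: power2_eq_square algebra_simps)
    also have "ennreal ((f x)\<^sup>2 + 1) = ennreal ((f x)\<^sup>2) + 1" by (subst ennreal_plus) auto
    finally show "ennreal ((f x - 1)\<^sup>2) + ennreal (2 * f x) = ennreal ((f x)\<^sup>2) + 1" .
  qed
  moreover have "(\<integral>\<^sup>+ x. ennreal ((f x - 1)\<^sup>2) + ennreal (2 * f x) \<partial>P) = X + 2"
  proof -
    have "(\<integral>\<^sup>+ x. ennreal ((f x - 1)\<^sup>2) + ennreal (2 * f x) \<partial>P) = X + (\<integral>\<^sup>+ x. ennreal (2 * f x) \<partial>P)"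
      unfolding X_def by (rule nn_integral_add) auto
    also have "(\<integral>\<^sup>+ x. ennreal (2 * f x) \<partial>P) = (\<integral>\<^sup>+ x. 2 * ennreal (f x) \<partial>P)"
      using f0 by (intro nn_integral_cong) (simp add: ennreal_mult)
    also have "\<dots> = 2 * (\<integral>\<^sup>+ x. ennreal (f x) \<partial>P)" by (rule nn_integral_cmult) auto
    finally show ?thesis using F1 by simp
  qed
  moreover have "(\<integral>\<^sup>+ x. ennreal ((f x)\<^sup>2) + 1 \<partial>P) = ennreal B + 1"
  proof -
    have "(\<integral>\<^sup>+ x. ennreal ((f x)\<^sup>2) + 1 \<partial>P) = (\<integral>\<^sup>+ x. ennreal ((f x)\<^sup>2) \<partial>P) + (\<integral>\<^sup>+ x. 1 \<partial>P)"
      by (rule nn_integral_add) auto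
    also have "(\<integral>\<^sup>+ x. 1 \<partial>P) = 1"
      using prob_space.emeasure_space_1[OF probP] by simp
    finally show ?thesis using F2 by simp
  qed
  ultimately have XB: "X + 2 = ennreal B + 1" by simp
  have "2 + X \<le> 2 + ennreal (E - 1)"
  proof -
    have "2 + X = ennreal (B + 1)" using XB B0 by (simp add: add.commute ennreal_plus)
    also have "\<dots> \<le> ennreal (E + 1)" using BE by (intro ennreal_leI) simp
    also have "\<dots> = ennreal (2 + (E - 1))" by (rule arg_cong[where f=ennreal]) simp
    also have "\<dots> = ennreal 2 + ennreal (E - 1)" using E1 by (intro ennreal_plus) auto
    also have "\<dots> = 2 + ennreal (E - 1)" by simp
    finally show ?thesis .
  qed
  then have "X \<le> ennreal (E - 1)" by (simp add: ennreal_add_left_cancel_le)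
  then have "chi2_div Q P \<le> ennreal (E - 1)" using chi X_def by simp
  then show ?thesis unfolding Q_def P_def \<nu>_def E_def .
qed


end
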